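(* Let $lc_n$ be the number of linked cycles on $[n]$. Then $lc_1=1$, $lc_2=2$, and for all $n\ge3$, $$lc_n=(2n-3)lc_{n-1}+lc_{n-2}.$$
   Context: Two finite sets of integers $E,F$ are nearly disjoint if for every $i\in E\cap F$ either ($i=\min(E)$, $|E|>1$, $i\ne\min(F)$) or ($i=\min(F)$, $|F|>1$, $i\ne\min(E)$). A linked partition of $[n]$ is a set of nonempty subsets (blocks) of $[n]$ with union $[n]$, any two distinct blocks nearly disjoint. A linked cycle on $[n]$ is a linked partition of $[n]$ together with a cyclic arrangement of the elements of each block. *)

theory Defs
  imports Main
begin

definition nearly_disjoint :: "nat set \<Rightarrow> nat set \<Rightarrow> bool" where
  "nearly_disjoint E F \<longleftrightarrow>
     (\<forall>i\<in>E \<inter> F. (i = Min E \<and> card E > 1 \<and> i \<noteq> Min F) \<or>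
                  (i = Min F \<and> card F > 1 \<and> i \<noteq> Min E))"

definition linked_partition :: "nat \<Rightarrow> nat set set \<Rightarrow> bool" where
  "linked_partition n P \<longleftrightarrow>
     (\<forall>B\<in>P. B \<noteq> {} \<and> B \<subseteq> {1..n}) \<and> \<Union>P = {1..n} \<and>
     (\<forall>E\<in>P. \<forall>F\<in>P. E \<noteq> F \<longrightarrow> nearly_disjoint E F)"

text \<open>A cyclic arrangement of a finite set B, represented as a cyclic permutation of B
  (a bijection of B with a single orbit), extended by the identity outside B.\<close>
definition cyclic_arrangement :: "nat set \<Rightarrow> (nat \<Rightarrow> nat) \<Rightarrow> bool" where
  "cyclic_arrangement B c \<longleftrightarrow>
     bij_betw c B B \<and> (\<forall>x. x \<notin> B \<longrightarrow> c x = x) \<and>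
     (\<forall>x\<in>B. \<forall>y\<in>B. \<exists>k. (c ^^ k) x = y)"

definition linked_cycle :: "nat \<Rightarrow> (nat set \<times> (nat \<Rightarrow> nat)) set \<Rightarrow> bool" where
  "linked_cycle n S \<longleftrightarrow>
     linked_partition n (fst ` S) \<and> inj_on fst S \<and>
     (\<forall>(B, c)\<in>S. cyclic_arrangement B c)"

definition lc :: "nat \<Rightarrow> nat" where
  "lc n = card {S. linked_cycle n S}"

end

theory Submission
  imports Defs "HOL-Combinatorics.Cycles" "HOL-Combinatorics.Multiset_Permutations"
begin


fun Ef :: "nat \<Rightarrow> nat \<Rightarrow> nat" where
  "Ef 0 0 = 1"
| "Ef 0 (Suc e) = 0"
| "Ef (Suc n) 0 = Ef n 0"
| "Ef (Suc n) (Suc e) = Ef n (Suc e) + (n + e) * Ef n e"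

lemma Ef_0: "Ef n 0 = 1"
  by (induction n) auto

lemma Ef_zero: "n \<le> e \<Longrightarrow> 0 < e \<Longrightarrow> Ef n e = 0"
proof (induction n arbitrary: e)
  case 0 then show ?case by (cases e) auto
next
  case (Suc n)
  then obtain f where f: "e = Suc f" by (cases e) auto
  show ?case
  proof (cases f)
    case 0 then show ?thesis using Suc f by auto
  next
    case (Suc g) then show ?thesis using Suc.IH Suc.prems f by auto
  qed
qed

lemma fact2: "fact (n+2) = (n+2)*((n+1)*(fact n::nat))"
  by (simp add: fact_Suc numeral_2_eq_2)

lemma Ef_closed: "Ef (e + k + 1) e * (2 ^ e * fact e * fact k) = fact (2 * e + k)"
proof (induction e arbitrary: k)
  case 0 then show ?case by (simp add: Ef_0)
next
  case (Suc e)
  note IHe = Suc.IH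
  show ?case
  proof (induction k)
    case 0
    have "Ef (Suc (Suc e)) (Suc e) = Ef (Suc e) (Suc e) + (Suc e + e) * Ef (Suc e) e"
      by (simp only: Ef.simps)
    moreover have z: "Ef (Suc e) (Suc e) = 0" by (rule Ef_zero) auto
    ultimately have "Ef (Suc e + 0 + 1) (Suc e) = (2*e+1) * Ef (e + 0 + 1) e"
      by (simp del: Ef.simps)
    then have "Ef (Suc e + 0 + 1) (Suc e) * (2 ^ Suc e * fact (Suc e) * fact 0)
       = (2*e+1) * (2 * (e+1)) * (Ef (e + 0 + 1) e * (2 ^ e * fact e * fact 0))"
      by (simp add: algebra_simps)
    also have "\<dots> = (2*e+1) * (2 * (e+1)) * fact (2*e)" using IHe[of 0] by simp
    also have "\<dots> = fact (2 * Suc e + 0)"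
      by (simp add: algebra_simps fact_Suc)
    finally show ?case .
  next
    case (Suc k)
    have r: "Ef (Suc e + Suc k + 1) (Suc e) = Ef (Suc e + k + 1) (Suc e) + (2*e+k+2) * Ef (e + Suc k + 1) e"
      by simp
    have "Ef (Suc e + Suc k + 1) (Suc e) * (2 ^ Suc e * fact (Suc e) * fact (Suc k))
       = (k+1) * (Ef (Suc e + k + 1) (Suc e) * (2 ^ Suc e * fact (Suc e) * fact k))
         + (2*e+k+2) * (2*(e+1)) * (Ef (e + Suc k + 1) e * (2 ^ e * fact e * fact (Suc k)))"
      unfolding r by (simp add: algebra_simps)
    also have "\<dots> = (k+1) * fact (2 * Suc e + k) + (2*e+k+2) * (2*(e+1)) * fact (2*e + Suc k)"
      using IHe[of "Suc k"] Suc.IH by simp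
    also have "\<dots> = fact (2 * Suc e + Suc k)"
    proof -
      have a: "fact (2 * Suc e + k) = (2*e+k+2) * fact (2*e + Suc k)"
        by (simp add: fact_Suc)
      have bb: "2 * Suc e + Suc k = (2*e+Suc k)+2" by simp
      have b: "fact (2 * Suc e + Suc k) = (2*e+k+3) * ((2*e+k+2) * fact (2*e + Suc k))"
      proof -
        have x: "2*e+Suc k+2 = 2*e+k+3" "2*e+Suc k+1 = 2*e+k+2" by simp_all
        show ?thesis unfolding bb fact2 unfolding x ..
      qed
      have g: "\<And>F::nat. (k+1)*((2*e+k+2)*F) + (2*e+k+2)*(2*(e+1))*F = (2*e+k+3)*((2*e+k+2)*F)"
        by (simp add: algebra_simps)
      show ?thesis unfolding a b by (rule g)
    qed
    finally show ?case .
  qed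
qed

lemma Ef_bessel: "Ef (m+2) (e+1) = (2*m+1) * Ef (m+1) e + Ef m (e+1)"
proof (cases "e < m + 1")
  case False
  then show ?thesis using Ef_zero[of "m+2" "e+1"] Ef_zero[of "m" "e+1"] Ef_zero[of "m+1" e]
    by (cases e) auto
next
  case True
  then obtain k where k: "m = e + k" by (metis add.commute le_Suc_ex less_Suc_eq_le Suc_eq_plus1)
  have c1: "Ef (Suc e + k + 1) (Suc e) * (2 ^ Suc e * fact (Suc e) * fact k) = fact (2 * Suc e + k)"
    by (rule Ef_closed)
  have c2: "Ef (e + k + 1) e * (2 ^ e * fact e * fact k) = fact (2 * e + k)"
    by (rule Ef_closed)
  have pos: "2 ^ Suc e * fact (Suc e) * fact k > (0::nat)" by simp
  show ?thesis
  proof (cases k)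
    case 0
    have z: "Ef m (e+1) = 0" using k 0 Ef_zero by simp
    have "Ef (m+2) (e+1) * (2 ^ Suc e * fact (Suc e) * fact k)
        = ((2*m+1) * Ef (m+1) e) * (2 ^ Suc e * fact (Suc e) * fact k)"
    proof -
      have "Ef (m+2) (e+1) * (2 ^ Suc e * fact (Suc e) * fact k) = fact (2 * Suc e + k)"
        using c1 k by simp
      also have "\<dots> = (2*e+2) * ((2*e+1) * fact (2*e))" using 0 fact2[of "2*e"] by simp
      also have "\<dots> = (2*m+1)*(2*e+2) * (Ef (e + k + 1) e * (2 ^ e * fact e * fact k))"
        using c2 k 0 by (simp add: algebra_simps)
      also have "\<dots> = ((2*m+1) * Ef (m+1) e) * (2 ^ Suc e * fact (Suc e) * fact k)"
        using k by (simp add: algebra_simps)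
      finally show ?thesis .
    qed
    then show ?thesis using pos z by simp
  next
    case (Suc j)
    show ?thesis
    proof (cases j)
      case 0
      have z: "Ef m (e+1) = 0" using k Suc 0 Ef_zero[of m "e+1"] by simp
      have "Ef (m+2) (e+1) * (2 ^ Suc e * fact (Suc e) * fact k)
          = ((2*m+1) * Ef (m+1) e) * (2 ^ Suc e * fact (Suc e) * fact k)"
      proof -
        have "Ef (m+2) (e+1) * (2 ^ Suc e * fact (Suc e) * fact k) = fact (2 * Suc e + k)"
          using c1 k by simp
        also have "\<dots> = (2*e+3) * ((2*e+2) * fact (2*e+1))" using 0 Suc fact2[of "2*e+1"]
          by (simp add: algebra_simps)
        also have "\<dots> = (2*m+1)*((2*e+2) * fact (2*e+k))"
          using k Suc 0 by (simp add: algebra_simps del: fact_Suc)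
        also have "\<dots> = (2*m+1)*((2*e+2) * (Ef (e + k + 1) e * (2 ^ e * fact e * fact k)))"
          by (simp only: c2)
        also have "\<dots> = ((2*m+1) * Ef (m+1) e) * (2 ^ Suc e * fact (Suc e) * fact k)"
          using k by (simp add: algebra_simps)
        finally show ?thesis .
      qed
      then show ?thesis using pos z by simp
    next
      case (Suc i)
      have kk: "k = i + 2" using Suc \<open>k = Suc j\<close> by simp
      have c3: "Ef (Suc e + i + 1) (Suc e) * (2 ^ Suc e * fact (Suc e) * fact i) = fact (2 * Suc e + i)"
        by (rule Ef_closed)
      have "Ef (m+2) (e+1) * (2 ^ Suc e * fact (Suc e) * fact k)
          = ((2*m+1) * Ef (m+1) e + Ef m (e+1)) * (2 ^ Suc e * fact (Suc e) * fact k)"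
      proof -
        have fk: "fact k = (i+2)*(i+1)* fact i" by (simp only: kk fact2 mult.assoc)
        have "Ef (m+2) (e+1) * (2 ^ Suc e * fact (Suc e) * fact k) = fact (2 * Suc e + k)"
          using c1 k by simp
        also have "\<dots> = (2*e+i+4)*(2*e+i+3) * fact (2*e+i+2)" using kk
          by (simp add: fact_Suc algebra_simps)
        also have "\<dots> = (2*m+1) * (2*e+2) * fact (2*e+k) + (i+2)*(i+1)*fact (2*e+i+2)"
        proof -
          have "fact (2*e+k) = fact (2*e+i+2)" using kk by (simp add: algebra_simps)
          moreover have "(2*e+i+4)*(2*e+i+3) = (2*m+1) * (2*e+2) + (i+2)*(i+1)"
            using k kk by (simp add: algebra_simps)
          ultimately show ?thesis by (metis add_mult_distrib)
        qed
        also have "\<dots> = ((2*m+1) * Ef (m+1) e + Ef m (e+1)) * (2 ^ Suc e * fact (Suc e) * fact k)"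
        proof -
          have "(2*m+1) * (2*e+2) * fact (2*e+k) = (2*m+1)*(2*e+2) * (Ef (e + k + 1) e * (2 ^ e * fact e * fact k))"
            using c2 by simp
          also have "\<dots> = ((2*m+1) * Ef (m+1) e) * (2 ^ Suc e * fact (Suc e) * fact k)"
            using k by (simp add: algebra_simps)
          finally have "(2*m+1) * (2*e+2) * fact (2*e+k) = ((2*m+1) * Ef (m+1) e) * (2 ^ Suc e * fact (Suc e) * fact k)" .
          moreover have "(i+2)*(i+1)*fact (2*e+i+2) = Ef m (e+1) * (2 ^ Suc e * fact (Suc e) * fact k)"
          proof -
            have c3': "Ef (e+1+i+1) (e+1) * (2^(e+1)*fact(e+1)*fact i) = fact(2*(e+1)+i)"
              by (rule Ef_closed)
            have m': "m = e+1+i+1" using k kk by simp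
            have eq: "2*e+i+2 = 2*(e+1)+i" by simp
            have g: "\<And>X Y Z W::nat. X*(Y*Z*((i+2)*(i+1)*W)) = (i+2)*(i+1)*(X*(Y*Z*W))"
              by (simp add: algebra_simps)
            have "Ef m (e+1) * (2 ^ Suc e * fact (Suc e) * fact k)
                = Ef (e+1+i+1) (e+1) * (2^(e+1)*fact(e+1)*((i+2)*(i+1)*fact i))"
              unfolding m' fk Suc_eq_plus1 ..
            also have "\<dots> = (i+2)*(i+1)*(Ef (e+1+i+1) (e+1) * (2^(e+1)*fact(e+1)*fact i))"
              by (rule g)
            also have "\<dots> = (i+2)*(i+1)*fact (2*e+i+2)" unfolding c3' eq ..
            finally show ?thesis by simp
          qed
          ultimately show ?thesis by (simp add: algebra_simps)
        qed
        finally show ?thesis .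
      qed
      then show ?thesis using pos by simp
    qed
  qed
qed

definition lcs :: "nat \<Rightarrow> nat" where "lcs n = (\<Sum>e\<le>n. Ef n e)"

lemma lcs_shift: "lcs m = Ef m 0 + (\<Sum>e\<le>m. Ef m (e+1))"
proof (cases m)
  case 0 then show ?thesis by (simp add: lcs_def)
next
  case (Suc k)
  have "(\<Sum>e\<le>m. Ef m (e+1)) = (\<Sum>e\<le>k. Ef m (Suc e))"
    using Suc Ef_zero[of m "Suc m"] by simp
  then show ?thesis unfolding lcs_def using Suc by (simp only: sum.atMost_Suc_shift)
qed

lemma lcs_rec: "lcs (m+2) = (2*m+1) * lcs (m+1) + lcs m"
proof -
  have "lcs (m+2) = Ef (m+2) 0 + (\<Sum>e\<le>m+1. Ef (m+2) (e+1))"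
    unfolding lcs_def by (simp add: sum.atMost_Suc_shift del: sum.atMost_Suc)
  also have "(\<Sum>e\<le>m+1. Ef (m+2) (e+1)) = (\<Sum>e\<le>m+1. (2*m+1) * Ef (m+1) e + Ef m (e+1))"
    by (rule sum.cong[OF refl], rule Ef_bessel)
  also have "\<dots> = (2*m+1) * (\<Sum>e\<le>m+1. Ef (m+1) e) + (\<Sum>e\<le>m+1. Ef m (e+1))"
    by (simp only: sum.distrib sum_distrib_left)
  also have "Ef (m+2) 0 = Ef m 0" by (simp add: Ef_0)
  also have "(\<Sum>e\<le>m+1. Ef m (e+1)) = (\<Sum>e\<le>m. Ef m (e+1))"
    using Ef_zero[of m "m+1"] Ef_zero[of m "m+2"] by simp
  also have "Ef m 0 + ((2*m+1) * (\<Sum>e\<le>m+1. Ef (m+1) e) + (\<Sum>e\<le>m. Ef m (e+1))) = (2*m+1) * lcs (m+1) + lcs m"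
    using lcs_shift[of m] unfolding lcs_def by simp
  finally show ?thesis .
qed

lemma "lcs 1 = 1" "lcs 2 = 2" by (simp_all add: lcs_def numeral_2_eq_2)


lemma col_pow_nth:
  assumes "distinct cs" "i < length cs"
  shows "((cycle_of_list cs) ^^ k) (cs ! i) = cs ! ((k + i) mod length cs)"
proof -
  have "map ((cycle_of_list cs) ^^ k) cs ! i = rotate k cs ! i"
    using cyclic_rotation[OF assms(1)] by simp
  then show ?thesis using assms(2) by (simp add: nth_rotate)
qed

lemma cyc_of_list_ok:
  assumes "xs \<in> permutations_of_set (B - {m})" "m \<in> B"
  shows "cyclic_arrangement B (cycle_of_list (m # xs))"
proof -
  let ?cs = "m # xs"
  have d: "distinct ?cs" and s: "set ?cs = B"
    using assms by (auto simp: permutations_of_set_def)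
  have "bij_betw (cycle_of_list ?cs) B B"
    using permutes_imp_bij[OF cycle_permutes[of ?cs]] s by simp
  moreover have "\<forall>x. x \<notin> B \<longrightarrow> cycle_of_list ?cs x = x"
    using id_outside_supp[of _ "m # xs"] s by auto
  moreover have "\<forall>x\<in>B. \<forall>y\<in>B. \<exists>k. (cycle_of_list ?cs ^^ k) x = y"
  proof (intro ballI)
    fix x y assume "x \<in> B" "y \<in> B"
    then obtain i j where ij: "i < length ?cs" "j < length ?cs" "?cs ! i = x" "?cs ! j = y"
      using s by (metis in_set_conv_nth)
    let ?L = "length ?cs"
    have e1: "j + ?L - i + i = j + ?L" using ij(1) by linarith
    have e2: "(j + ?L) mod ?L = j" by (simp only: mod_add_self2) (rule mod_less[OF ij(2)])
    have "(j + ?L - i + i) mod ?L = j" unfolding e1 e2 ..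
    then have "(cycle_of_list ?cs ^^ (j + ?L - i)) x = y"
      using col_pow_nth[OF d ij(1)] ij by simp
    then show "\<exists>k. (cycle_of_list ?cs ^^ k) x = y" by blast
  qed
  ultimately show ?thesis unfolding cyclic_arrangement_def by blast
qed

lemma cyc_of_list_inj:
  assumes "m \<in> B" "finite B"
  shows "inj_on (\<lambda>xs. cycle_of_list (m # xs)) (permutations_of_set (B - {m}))"
proof (rule inj_onI)
  fix xs ys assume xs: "xs \<in> permutations_of_set (B - {m})" and ys: "ys \<in> permutations_of_set (B - {m})"
    and eq: "cycle_of_list (m # xs) = cycle_of_list (m # ys)"
  have dx: "distinct (m # xs)" and dy: "distinct (m # ys)"
    using xs ys by (auto simp: permutations_of_set_def)
  have lx: "length xs = card (B - {m})" using xs distinct_card[of xs] by (auto simp: permutations_of_set_def)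
  have ly: "length ys = card (B - {m})" using ys distinct_card[of ys] by (auto simp: permutations_of_set_def)
  have "m # xs = m # ys"
  proof (rule nth_equalityI)
    show "length (m # xs) = length (m # ys)" using lx ly by simp
    fix i assume i: "i < length (m # xs)"
    have "(cycle_of_list (m # xs) ^^ i) ((m # xs) ! 0) = (m # xs) ! ((i + 0) mod length (m # xs))"
      by (rule col_pow_nth[OF dx]) simp
    moreover have "(cycle_of_list (m # ys) ^^ i) ((m # ys) ! 0) = (m # ys) ! ((i + 0) mod length (m # ys))"
      by (rule col_pow_nth[OF dy]) simp
    ultimately show "(m # xs) ! i = (m # ys) ! i" using i eq lx ly by simp
  qed
  then show "xs = ys" by simp
qed

lemma cyc_surj:
  assumes "cyclic_arrangement B c" "m \<in> B" "finite B"
  shows "c \<in> (\<lambda>xs. cycle_of_list (m # xs)) ` permutations_of_set (B - {m})"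
proof -
  have bij: "bij_betw c B B" and out: "\<And>x. x \<notin> B \<Longrightarrow> c x = x"
    and orb: "\<And>x y. x \<in> B \<Longrightarrow> y \<in> B \<Longrightarrow> \<exists>k. (c ^^ k) x = y"
    using assms(1) unfolding cyclic_arrangement_def by auto
  have perm: "c permutes B" using bij out by (simp add: bij_imp_permutes)
  have pc: "permutation c" using permutes_imp_permutation[OF assms(3) perm] .
  define cs where "cs = support c m"
  have d: "distinct cs" unfolding cs_def by (rule cycle_of_permutation[OF pc])
  have inB: "(c ^^ k) m \<in> B" for k
    by (induction k) (use assms(2) bij in \<open>auto simp: bij_betw_def\<close>)
  have s: "set cs = B"
  proof -
    have "range (\<lambda>i. (c ^^ i) m) \<subseteq> B" using inB by auto
    moreover have "B \<subseteq> range (\<lambda>i. (c ^^ i) m)" using orb[OF assms(2)] by (metis rangeI subsetI)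
    ultimately show ?thesis unfolding cs_def support_set[OF pc] by blast
  qed
  have L: "length cs = least_power c m" unfolding cs_def by simp
  have Lpos: "least_power c m > 0" using least_power_of_permutation(2)[OF pc] .
  have nth: "cs ! i = (c ^^ i) m" if "i < length cs" for i using that unfolding cs_def by simp
  have cs0: "cs ! 0 = m" using nth[of 0] L Lpos by simp
  have ceq: "c = cycle_of_list cs"
  proof
    fix x show "c x = cycle_of_list cs x"
    proof (cases "x \<in> B")
      case False then show ?thesis using out id_outside_supp s by metis
    next
      case True
      then obtain i where i: "i < length cs" "cs ! i = x" using s by (metis in_set_conv_nth)
      have r: "cycle_of_list cs x = cs ! ((1 + i) mod length cs)"
        using col_pow_nth[OF d i(1), of 1] i by simp
      have cx: "c x = (c ^^ Suc i) m" using nth[OF i(1)] i by simp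
      show ?thesis
      proof (cases "Suc i < length cs")
        case True then show ?thesis using r cx nth by simp
      next
        case False
        then have "Suc i = length cs" using i by simp
        then show ?thesis using r cx L least_power_of_permutation(1)[OF pc] cs0 by simp
      qed
    qed
  qed
  have cse: "cs = m # tl cs" using cs0 L Lpos by (cases cs) auto
  moreover have "tl cs \<in> permutations_of_set (B - {m})"
  proof -
    have "distinct (m # tl cs)" using d cse by simp
    then have "m \<notin> set (tl cs)" "distinct (tl cs)" by auto
    moreover have "insert m (set (tl cs)) = B" using s cse by (metis list.simps(15))
    ultimately show ?thesis unfolding permutations_of_set_def by auto
  qed
  ultimately show ?thesis using ceq by (metis image_eqI)
qed

lemma card_cyc:
  assumes "finite B" "B \<noteq> {}"
  shows "card {c. cyclic_arrangement B c} = fact (card B - 1)"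
proof -
  obtain m where m: "m \<in> B" using assms by auto
  have "{c. cyclic_arrangement B c} = (\<lambda>xs. cycle_of_list (m # xs)) ` permutations_of_set (B - {m})"
    using cyc_of_list_ok[OF _ m] cyc_surj[OF _ m assms(1)] by blast
  then have "card {c. cyclic_arrangement B c} = card (permutations_of_set (B - {m}))"
    using card_image[OF cyc_of_list_inj[OF m assms(1)]] by simp
  also have "\<dots> = fact (card B - 1)" using assms m by simp
  finally show ?thesis .
qed


definition cycset :: "nat set \<Rightarrow> (nat \<Rightarrow> nat) set" where
  "cycset B = {c. cyclic_arrangement B c}"

definition FP :: "nat set set \<Rightarrow> (nat set \<times> (nat \<Rightarrow> nat)) set set" where
  "FP P = {S. fst ` S = P \<and> inj_on fst S \<and> (\<forall>(B, c)\<in>S. cyclic_arrangement B c)}"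

lemma finite_LP: "finite {P. linked_partition n P}"
proof -
  have "{P. linked_partition n P} \<subseteq> Pow (Pow {1..n})"
    unfolding linked_partition_def by auto
  then show ?thesis by (rule finite_subset) simp
qed

lemma LP_blocks: "linked_partition n P \<Longrightarrow> B \<in> P \<Longrightarrow> finite B \<and> B \<noteq> {}"
  unfolding linked_partition_def using finite_subset[of B "{1..n}"] by auto

lemma LP_finite: "linked_partition n P \<Longrightarrow> finite P"
proof -
  assume "linked_partition n P"
  then have "P \<subseteq> Pow {1..n}" unfolding linked_partition_def by auto
  then show "finite P" by (rule finite_subset) simp
qed

lemma FP_eq: "FP P = (\<lambda>g. (\<lambda>B. (B, g B)) ` P) ` (PiE P cycset)"
proof (intro equalityI subsetI)
  fix S assume S: "S \<in> FP P"
  then have fs: "fst ` S = P" and inj: "inj_on fst S" and cy: "\<forall>(B, c)\<in>S. cyclic_arrangement B c"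
    unfolding FP_def by blast+
  define g where "g = (\<lambda>B. if B \<in> P then (SOME c. (B, c) \<in> S) else undefined)"
  have gin: "(B, g B) \<in> S" if "B \<in> P" for B
  proof -
    have "B \<in> fst ` S" using that fs by simp
    then obtain x where x: "x \<in> S" "B = fst x" by (rule imageE)
    then have "(B, snd x) \<in> S" by simp
    then have "(B, SOME c. (B, c) \<in> S) \<in> S" by (rule someI[where P="\<lambda>c. (B, c) \<in> S"])
    then show ?thesis unfolding g_def using that by simp
  qed
  have "g \<in> PiE P cycset"
    unfolding PiE_def extensional_def cycset_def using gin cy g_def by fastforce
  moreover have "S = (\<lambda>B. (B, g B)) ` P"
  proof (intro equalityI subsetI)
    fix x assume x: "x \<in> S"
    obtain B c where xb: "x = (B, c)" by (cases x)
    have "fst x \<in> fst ` S" using x by (rule imageI)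
    then have B: "B \<in> P" using fs xb by simp
    have gB: "(B, g B) \<in> S" using gin B .
    have x': "(B, c) \<in> S" using x xb by simp
    have "(B, g B) = (B, c)" by (rule inj_onD[OF inj _ gB x']) simp
    then have "c = g B" by simp
    then show "x \<in> (\<lambda>B. (B, g B)) ` P" using B xb by blast
  next
    fix x assume "x \<in> (\<lambda>B. (B, g B)) ` P"
    then show "x \<in> S" using gin by blast
  qed
  ultimately show "S \<in> (\<lambda>g. (\<lambda>B. (B, g B)) ` P) ` (PiE P cycset)" by blast
next
  fix S assume "S \<in> (\<lambda>g. (\<lambda>B. (B, g B)) ` P) ` (PiE P cycset)"
  then obtain g where g: "g \<in> PiE P cycset" and S: "S = (\<lambda>B. (B, g B)) ` P" by blast
  have "fst ` S = P" unfolding S by force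
  moreover have "inj_on fst S" unfolding S inj_on_def by auto
  moreover have "\<forall>(B, c)\<in>S. cyclic_arrangement B c"
    using g unfolding S cycset_def PiE_def Pi_def by auto
  ultimately show "S \<in> FP P" unfolding FP_def by blast
qed

lemma FP_inj: "inj_on (\<lambda>g. (\<lambda>B. (B, g B)) ` P) (PiE P cycset)"
proof (rule inj_onI)
  fix g h assume g: "g \<in> PiE P cycset" and h: "h \<in> PiE P cycset"
    and eq: "(\<lambda>B. (B, g B)) ` P = (\<lambda>B. (B, h B)) ` P"
  show "g = h"
  proof (rule PiE_ext[OF g h])
    fix B assume "B \<in> P"
    then have "(B, g B) \<in> (\<lambda>B. (B, h B)) ` P" using eq by blast
    then show "g B = h B" by auto
  qed
qed

lemma card_FP:
  assumes "linked_partition n P"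
  shows "card (FP P) = (\<Prod>B\<in>P. fact (card B - 1))"
proof -
  have "card (FP P) = card (PiE P cycset)"
    unfolding FP_eq by (rule card_image[OF FP_inj])
  also have "\<dots> = (\<Prod>B\<in>P. card (cycset B))"
    by (rule card_PiE[OF LP_finite[OF assms]])
  also have "\<dots> = (\<Prod>B\<in>P. fact (card B - 1))"
    using LP_blocks[OF assms] card_cyc unfolding cycset_def by (intro prod.cong) auto
  finally show ?thesis .
qed

lemma finite_FP:
  assumes "linked_partition n P"
  shows "finite (FP P)"
proof -
  have "finite (cycset B)" if "B \<in> P" for B
  proof -
    have "card (cycset B) > 0"
      using card_cyc LP_blocks[OF assms that] unfolding cycset_def by simp
    then show ?thesis using card_gt_0_iff by blast
  qed
  then have "finite (PiE P cycset)" using LP_finite[OF assms] by (intro finite_PiE) auto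
  then show ?thesis unfolding FP_eq by simp
qed

lemma lc_sum: "lc n = (\<Sum>P\<in>{P. linked_partition n P}. \<Prod>B\<in>P. fact (card B - 1))"
proof -
  have "{S. linked_cycle n S} = (\<Union>P\<in>{P. linked_partition n P}. FP P)"
    unfolding linked_cycle_def FP_def by auto
  then have "lc n = card (\<Union>P\<in>{P. linked_partition n P}. FP P)" unfolding lc_def by simp
  also have "\<dots> = (\<Sum>P\<in>{P. linked_partition n P}. card (FP P))"
  proof (rule card_UN_disjoint)
    show "finite {P. linked_partition n P}" by (rule finite_LP)
    show "\<forall>P\<in>{P. linked_partition n P}. finite (FP P)" using finite_FP by auto
    show "\<forall>P\<in>{P. linked_partition n P}. \<forall>Q\<in>{P. linked_partition n P}. P \<noteq> Q \<longrightarrow> FP P \<inter> FP Q = {}"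
      by (auto simp: FP_def)
  qed
  also have "\<dots> = (\<Sum>P\<in>{P. linked_partition n P}. \<Prod>B\<in>P. fact (card B - 1))"
    by (rule sum.cong) (auto simp: card_FP)
  finally show ?thesis .
qed


definition PF :: "nat \<Rightarrow> (nat \<Rightarrow> nat) set" where
  "PF n = {p. \<forall>j. (j \<in> {1..n} \<longrightarrow> p j < j) \<and> (j \<notin> {1..n} \<longrightarrow> p j = 0)}"

definition ch :: "(nat \<Rightarrow> nat) \<Rightarrow> nat \<Rightarrow> nat set" where
  "ch p m = {j. p j = m}"

definition blk :: "(nat \<Rightarrow> nat) \<Rightarrow> nat \<Rightarrow> nat set" where
  "blk p m = insert m (ch p m)"

definition Mins :: "nat \<Rightarrow> (nat \<Rightarrow> nat) \<Rightarrow> nat set" where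
  "Mins n p = {m \<in> {1..n}. p m = 0 \<or> (\<exists>j. p j = m)}"

definition Phi :: "nat \<Rightarrow> (nat \<Rightarrow> nat) \<Rightarrow> nat set set" where
  "Phi n p = blk p ` Mins n p"

definition W :: "nat \<Rightarrow> (nat \<Rightarrow> nat) \<Rightarrow> nat" where
  "W n p = (\<Prod>m\<in>{1..n}. fact (card (ch p m)))"

lemma PF_D1: "p \<in> PF n \<Longrightarrow> 1 \<le> j \<Longrightarrow> j \<le> n \<Longrightarrow> p j < j"
  unfolding PF_def by auto

lemma PF_D2: assumes "p \<in> PF n" "p j \<noteq> 0" shows "1 \<le> j \<and> j \<le> n"
proof (rule ccontr)
  assume "\<not> (1 \<le> j \<and> j \<le> n)"
  then have "j \<notin> {1..n}" by simp
  then have "p j = 0" using assms(1) unfolding PF_def by blast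
  then show False using assms(2) by simp
qed

lemma ch_sub: "p \<in> PF n \<Longrightarrow> 1 \<le> m \<Longrightarrow> ch p m \<subseteq> {m<..n}"
proof
  fix j assume p: "p \<in> PF n" and m: "1 \<le> m" and j: "j \<in> ch p m"
  then have pj: "p j = m" unfolding ch_def by simp
  then have "1 \<le> j \<and> j \<le> n" using PF_D2[OF p] m by simp
  moreover then have "m < j" using PF_D1[OF p] pj by auto
  ultimately show "j \<in> {m<..n}" by simp
qed

lemma ch_finite: assumes "p \<in> PF n" "1 \<le> m" shows "finite (ch p m)"
  using finite_subset[OF ch_sub[OF assms]] by simp

lemma m_notin_ch: assumes "p \<in> PF n" "1 \<le> m" shows "m \<notin> ch p m"
  using ch_sub[OF assms] by auto

lemma Min_blk: "p \<in> PF n \<Longrightarrow> 1 \<le> m \<Longrightarrow> Min (blk p m) = m"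
  unfolding blk_def using ch_finite[of p n m] ch_sub[of p n m]
  by (intro Min_eqI) auto

lemma card_blk: "p \<in> PF n \<Longrightarrow> 1 \<le> m \<Longrightarrow> card (blk p m) = Suc (card (ch p m))"
  unfolding blk_def using ch_finite m_notin_ch by simp

lemma blk_sub: "p \<in> PF n \<Longrightarrow> m \<in> {1..n} \<Longrightarrow> blk p m \<subseteq> {1..n}"
  unfolding blk_def using ch_sub[of p n m] by auto

lemma Phi_LP:
  assumes p: "p \<in> PF n"
  shows "linked_partition n (Phi n p)"
  unfolding linked_partition_def
proof (intro conjI)
  show "\<forall>B\<in>Phi n p. B \<noteq> {} \<and> B \<subseteq> {1..n}"
    unfolding Phi_def Mins_def using blk_sub[OF p] by (auto simp: blk_def)
  show "\<Union> (Phi n p) = {1..n}"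
  proof (intro equalityI subsetI)
    fix x assume "x \<in> \<Union> (Phi n p)"
    then show "x \<in> {1..n}" unfolding Phi_def Mins_def using blk_sub[OF p] by blast
  next
    fix j assume j: "j \<in> {1..n}"
    show "j \<in> \<Union> (Phi n p)"
    proof (cases "p j = 0")
      case True
      then have "j \<in> Mins n p" using j unfolding Mins_def by simp
      then show ?thesis unfolding Phi_def blk_def by blast
    next
      case False
      then have "p j \<in> Mins n p" using PF_D1[OF p, of j] j unfolding Mins_def by auto
      moreover have "j \<in> blk p (p j)" unfolding blk_def ch_def by simp
      ultimately show ?thesis unfolding Phi_def by blast
    qed
  qed
  show "\<forall>E\<in>Phi n p. \<forall>F\<in>Phi n p. E \<noteq> F \<longrightarrow> nearly_disjoint E F"
  proof (intro ballI impI)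
    fix E F assume E: "E \<in> Phi n p" and F: "F \<in> Phi n p" and EF: "E \<noteq> F"
    obtain a where a: "a \<in> Mins n p" "E = blk p a" using E unfolding Phi_def by blast
    obtain b where b: "b \<in> Mins n p" "F = blk p b" using F unfolding Phi_def by blast
    have a1: "1 \<le> a" and b1: "1 \<le> b" using a b unfolding Mins_def by auto
    have ab: "a \<noteq> b" using a b EF by blast
    have mE: "Min E = a" using Min_blk[OF p a1] a by simp
    have mF: "Min F = b" using Min_blk[OF p b1] b by simp
    have cardgt: "card (blk p m) > 1" if mm: "m \<in> Mins n p" and pm: "p m \<noteq> 0" for m
    proof -
      have m1: "1 \<le> m" using mm unfolding Mins_def by auto
      have "p m = 0 \<or> (\<exists>j. p j = m)" using mm unfolding Mins_def by blast
      then obtain j where "p j = m" using pm by blast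
      then have "ch p m \<noteq> {}" unfolding ch_def by auto
      then have "card (ch p m) > 0" using ch_finite[OF p m1] by auto
      then show ?thesis using card_blk[OF p m1] by simp
    qed
    show "nearly_disjoint E F" unfolding nearly_disjoint_def
    proof
      fix i assume i: "i \<in> E \<inter> F"
      show "(i = Min E \<and> card E > 1 \<and> i \<noteq> Min F) \<or> (i = Min F \<and> card F > 1 \<and> i \<noteq> Min E)"
      proof (cases "i = a")
        case True
        then have "p i = b" using i ab b unfolding blk_def ch_def by auto
        then have "card E > 1" using cardgt[OF a(1)] a True b1 by simp
        then show ?thesis using True mE mF ab by simp
      next
        case False
        then have pia: "p i = a" using i a unfolding blk_def ch_def by auto
        then have "i = b" using i b ab unfolding blk_def ch_def by auto
        then have "card F > 1" using cardgt[OF b(1)] b pia a1 by simp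
        then show ?thesis using \<open>i = b\<close> False mE mF by simp
      qed
    qed
  qed
qed

lemma Phi_inj_aux:
  assumes p: "p \<in> PF n" and q: "q \<in> PF n" and eq: "Phi n p = Phi n q" and pj: "p j \<noteq> 0"
  shows "q j = p j"
proof -
  let ?m = "p j"
  have j: "1 \<le> j" "j \<le> n" using PF_D2[OF p pj] by auto
  have mj: "?m < j" using PF_D1[OF p j] .
  have m1: "1 \<le> ?m" using pj by simp
  have "?m \<in> Mins n p" unfolding Mins_def using m1 mj j by auto
  then have "blk p ?m \<in> Phi n q" using eq unfolding Phi_def by blast
  then obtain m' where m': "m' \<in> Mins n q" "blk p ?m = blk q m'" unfolding Phi_def by blast
  have "1 \<le> m'" using m' unfolding Mins_def by auto
  then have "m' = ?m" using Min_blk[OF p m1] Min_blk[OF q] m' by metis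
  moreover have "j \<in> blk p ?m" unfolding blk_def ch_def by simp
  ultimately have "j \<in> blk q ?m" using m' by simp
  then show ?thesis using mj unfolding blk_def ch_def by auto
qed

lemma Phi_inj: "inj_on (Phi n) (PF n)"
proof (rule inj_onI)
  fix p q assume p: "p \<in> PF n" and q: "q \<in> PF n" and eq: "Phi n p = Phi n q"
  show "p = q"
  proof
    fix j show "p j = q j"
    proof (cases "p j = 0")
      case True
      show ?thesis
      proof (rule ccontr)
        assume "p j \<noteq> q j"
        then have "q j \<noteq> 0" using True by simp
        then have "p j = q j" using Phi_inj_aux[OF q p eq[symmetric]] by simp
        then show False using \<open>p j \<noteq> q j\<close> by simp
      qed
    next
      case False
      then show ?thesis using Phi_inj_aux[OF p q eq] by simp
    qed
  qed
qed

lemma W_Phi: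
  assumes p: "p \<in> PF n"
  shows "(\<Prod>B\<in>Phi n p. fact (card B - 1)) = W n p"
proof -
  have inj: "inj_on (blk p) (Mins n p)"
  proof (rule inj_onI)
    fix a b assume a: "a \<in> Mins n p" and b: "b \<in> Mins n p" and e: "blk p a = blk p b"
    have a1: "1 \<le> a" using a unfolding Mins_def by simp
    have b1: "1 \<le> b" using b unfolding Mins_def by simp
    have "a = Min (blk p a)" using Min_blk[OF p a1] by simp
    also have "\<dots> = Min (blk p b)" using e by simp
    also have "\<dots> = b" using Min_blk[OF p b1] by simp
    finally show "a = b" .
  qed
  have "(\<Prod>B\<in>Phi n p. fact (card B - 1)) = (\<Prod>m\<in>Mins n p. fact (card (blk p m) - 1))"
    unfolding Phi_def by (simp only: prod.reindex[OF inj] comp_def)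
  also have "\<dots> = (\<Prod>m\<in>Mins n p. fact (card (ch p m)))"
  proof (rule prod.cong[OF refl])
    fix m assume "m \<in> Mins n p"
    then have "1 \<le> m" unfolding Mins_def by simp
    then show "fact (card (blk p m) - 1) = fact (card (ch p m))" using card_blk[OF p] by simp
  qed
  also have "\<dots> = (\<Prod>m\<in>{1..n}. fact (card (ch p m)))"
  proof (rule prod.mono_neutral_left)
    show "finite {1..n}" by simp
    show "Mins n p \<subseteq> {1..n}" unfolding Mins_def by auto
    show "\<forall>i\<in>{1..n} - Mins n p. fact (card (ch p i)) = 1"
    proof
      fix i assume "i \<in> {1..n} - Mins n p"
      then have "\<not> (\<exists>j. p j = i)" unfolding Mins_def by blast
      then have "ch p i = {}" unfolding ch_def by blast
      then show "fact (card (ch p i)) = 1" by simp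
    qed
  qed
  finally show ?thesis unfolding W_def .
qed

locale LPloc =
  fixes n :: nat and P :: "nat set set"
  assumes LP: "linked_partition n P"
begin

lemma blocks: "B \<in> P \<Longrightarrow> finite B \<and> B \<noteq> {} \<and> B \<subseteq> {1..n}"
  using LP unfolding linked_partition_def using finite_subset[of B "{1..n}"] by auto

lemma min_in: "B \<in> P \<Longrightarrow> Min B \<in> B"
  using blocks by auto

lemma min_pos: "B \<in> P \<Longrightarrow> 1 \<le> Min B"
  using blocks min_in by fastforce

lemma nd: "E \<in> P \<Longrightarrow> F \<in> P \<Longrightarrow> E \<noteq> F \<Longrightarrow> nearly_disjoint E F"
  using LP unfolding linked_partition_def by blast

lemma uniq_parent:
  assumes "B \<in> P" "j \<in> B" "j \<noteq> Min B" "B' \<in> P" "j \<in> B'" "j \<noteq> Min B'"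
  shows "B = B'"
  using nd[of B B'] assms unfolding nearly_disjoint_def by blast

lemma uniq_min:
  assumes "B \<in> P" "B' \<in> P" "Min B = Min B'"
  shows "B = B'"
proof (rule ccontr)
  assume "B \<noteq> B'"
  moreover have "Min B \<in> B \<inter> B'" using min_in assms by (metis IntI)
  ultimately show False using nd[of B B'] assms unfolding nearly_disjoint_def by blast
qed

lemma singleton_not_child:
  assumes "B \<in> P" "B = {m}" "B' \<in> P" "m \<in> B'" "m \<noteq> Min B'"
  shows False
proof -
  have "B \<noteq> B'" using assms by auto
  moreover have "m \<in> B \<inter> B'" using assms by auto
  ultimately show False using nd[of B B'] assms unfolding nearly_disjoint_def by auto
qed

definition par :: "nat \<Rightarrow> nat" where
  "par j = (if \<exists>B\<in>P. j \<in> B \<and> j \<noteq> Min B then Min (THE B. B \<in> P \<and> j \<in> B \<and> j \<noteq> Min B) else 0)"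

lemma par_eq: "B \<in> P \<Longrightarrow> j \<in> B \<Longrightarrow> j \<noteq> Min B \<Longrightarrow> par j = Min B"
proof -
  assume a: "B \<in> P" "j \<in> B" "j \<noteq> Min B"
  have "(THE B. B \<in> P \<and> j \<in> B \<and> j \<noteq> Min B) = B"
    using a uniq_parent by (intro the_equality) auto
  then show ?thesis unfolding par_def using a by auto
qed

lemma par_0: "\<not> (\<exists>B\<in>P. j \<in> B \<and> j \<noteq> Min B) \<Longrightarrow> par j = 0"
  unfolding par_def by auto

lemma par_ex: assumes "par j \<noteq> 0" obtains B where "B \<in> P" "j \<in> B" "j \<noteq> Min B"
proof -
  have "\<exists>B\<in>P. j \<in> B \<and> j \<noteq> Min B"
  proof (rule ccontr)
    assume "\<not> (\<exists>B\<in>P. j \<in> B \<and> j \<noteq> Min B)"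
    then have "par j = 0" by (rule par_0)
    then show False using assms by simp
  qed
  then show ?thesis using that by blast
qed

lemma par_PF: "par \<in> PF n"
  unfolding PF_def
proof (intro CollectI allI conjI impI)
  fix j assume j: "j \<in> {1..n}"
  show "par j < j"
  proof (cases "\<exists>B\<in>P. j \<in> B \<and> j \<noteq> Min B")
    case True
    then obtain B where B: "B \<in> P" "j \<in> B" "j \<noteq> Min B" by blast
    have "Min B \<le> j" using Min_le blocks[OF B(1)] B(2) by blast
    then show ?thesis using par_eq[OF B] B(3) by simp
  next
    case False then show ?thesis using par_0 j by simp
  qed
next
  fix j assume j: "j \<notin> {1..n}"
  then have "\<not> (\<exists>B\<in>P. j \<in> B \<and> j \<noteq> Min B)" using blocks by blast
  then show "par j = 0" by (rule par_0)
qed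

lemma blk_par: "B \<in> P \<Longrightarrow> blk par (Min B) = B"
proof (intro equalityI subsetI)
  fix x assume B: "B \<in> P" and x: "x \<in> blk par (Min B)"
  show "x \<in> B"
  proof (cases "x = Min B")
    case True then show ?thesis using min_in[OF B] by simp
  next
    case False
    then have px: "par x = Min B" using x unfolding blk_def ch_def by simp
    then have "par x \<noteq> 0" using min_pos[OF B] by simp
    then obtain B' where B': "B' \<in> P" "x \<in> B'" "x \<noteq> Min B'" by (rule par_ex)
    then have "Min B' = Min B" using par_eq px by simp
    then have "B' = B" using uniq_min B' B by blast
    then show ?thesis using B' by simp
  qed
next
  fix x assume B: "B \<in> P" and x: "x \<in> B"
  show "x \<in> blk par (Min B)"
    using par_eq[OF B x] unfolding blk_def ch_def by auto
qed

lemma min_Mins: "B \<in> P \<Longrightarrow> Min B \<in> Mins n par"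
proof -
  assume B: "B \<in> P"
  have in1: "Min B \<in> {1..n}" using blocks[OF B] min_in[OF B] by blast
  show ?thesis
  proof (cases "\<exists>x\<in>B. x \<noteq> Min B")
    case True
    then obtain x where "x \<in> B" "x \<noteq> Min B" by blast
    then have "par x = Min B" using par_eq B by simp
    then show ?thesis using in1 unfolding Mins_def by auto
  next
    case False
    then have Bs: "B = {Min B}" using min_in[OF B] by blast
    have "par (Min B) = 0"
    proof (rule par_0, rule notI)
      assume "\<exists>B'\<in>P. Min B \<in> B' \<and> Min B \<noteq> Min B'"
      then obtain B' where "B' \<in> P" "Min B \<in> B'" "Min B \<noteq> Min B'" by blast
      then show False using singleton_not_child[OF B Bs] by blast
    qed
    then show ?thesis using in1 unfolding Mins_def by auto
  qed
qed

lemma Mins_block: "m \<in> Mins n par \<Longrightarrow> \<exists>B\<in>P. Min B = m"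
proof -
  assume m: "m \<in> Mins n par"
  then have m1: "m \<in> {1..n}" unfolding Mins_def by auto
  show ?thesis
  proof (cases "\<exists>j. par j = m")
    case True
    then obtain j where pj: "par j = m" by blast
    then have "par j \<noteq> 0" using m1 by simp
    then obtain B where B: "B \<in> P" "j \<in> B" "j \<noteq> Min B" by (rule par_ex)
    then show ?thesis using par_eq pj by auto
  next
    case False
    then have pm: "par m = 0" using m unfolding Mins_def by auto
    have "m \<in> \<Union>P" using LP m1 unfolding linked_partition_def by auto
    then obtain B where B: "B \<in> P" "m \<in> B" by blast
    have "m = Min B"
    proof (rule ccontr)
      assume "m \<noteq> Min B"
      then have "par m = Min B" using par_eq B by simp
      then show False using pm min_pos[OF B(1)] by simp
    qed
    then show ?thesis using B by blast
  qed
qed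

lemma Phi_par: "Phi n par = P"
proof (intro equalityI subsetI)
  fix B assume "B \<in> Phi n par"
  then obtain m where m: "m \<in> Mins n par" "B = blk par m" unfolding Phi_def by blast
  obtain B' where "B' \<in> P" "Min B' = m" using Mins_block[OF m(1)] by blast
  then show "B \<in> P" using blk_par m by auto
next
  fix B assume B: "B \<in> P"
  then show "B \<in> Phi n par" unfolding Phi_def using blk_par[OF B] min_Mins[OF B] by (metis image_eqI)
qed

end

lemma Phi_surj: "linked_partition n P \<Longrightarrow> \<exists>p\<in>PF n. Phi n p = P"
  using LPloc.par_PF LPloc.Phi_par LPloc.intro by blast

lemma LP_sum_PF:
  "(\<Sum>P\<in>{P. linked_partition n P}. \<Prod>B\<in>P. fact (card B - 1)) = (\<Sum>p\<in>PF n. W n p)"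
proof -
  have img: "Phi n ` PF n = {P. linked_partition n P}"
    using Phi_LP Phi_surj by blast
  have "(\<Sum>P\<in>{P. linked_partition n P}. \<Prod>B\<in>P. fact (card B - 1))
      = (\<Sum>p\<in>PF n. \<Prod>B\<in>Phi n p. fact (card B - 1))"
    unfolding img[symmetric] by (simp add: sum.reindex[OF Phi_inj])
  also have "\<dots> = (\<Sum>p\<in>PF n. W n p)" by (rule sum.cong[OF refl], rule W_Phi)
  finally show ?thesis .
qed


definition edges :: "(nat \<Rightarrow> nat) \<Rightarrow> nat" where
  "edges p = card {j. p j \<noteq> 0}"

definition Ecomb :: "nat \<Rightarrow> nat \<Rightarrow> nat" where
  "Ecomb n e = (\<Sum>p\<in>PF n. if edges p = e then W n p else 0)"

lemma PF_0: "PF 0 = {\<lambda>_. 0}"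
  unfolding PF_def by auto

lemma nz_sub: "p \<in> PF n \<Longrightarrow> {j. p j \<noteq> 0} \<subseteq> {1..n}"
  using PF_D2 by fastforce

lemma edges_le: assumes "p \<in> PF n" shows "edges p \<le> n"
proof -
  have "card {j. p j \<noteq> 0} \<le> card {1..n}" by (rule card_mono[OF _ nz_sub[OF assms]]) simp
  then show ?thesis unfolding edges_def by simp
qed

lemma PF_Suc: "PF (Suc n) = (\<lambda>(p, x). p(Suc n := x)) ` (PF n \<times> {0..n})"
proof (intro equalityI subsetI)
  fix q assume q: "q \<in> PF (Suc n)"
  define p where "p = q(Suc n := 0)"
  have qx: "q (Suc n) \<le> n" using PF_D1[OF q, of "Suc n"] by simp
  have "p \<in> PF n" unfolding PF_def
  proof (intro CollectI allI conjI impI)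
    fix j assume "j \<in> {1..n}"
    then show "p j < j" using PF_D1[OF q, of j] unfolding p_def by auto
  next
    fix j assume j: "j \<notin> {1..n}"
    show "p j = 0"
    proof (cases "j = Suc n")
      case True then show ?thesis unfolding p_def by simp
    next
      case False
      then have "j \<notin> {1..Suc n}" using j by auto
      then show ?thesis using q unfolding PF_def p_def by auto
    qed
  qed
  then have mem: "(p, q (Suc n)) \<in> PF n \<times> {0..n}" using qx by simp
  have qeq: "q = (\<lambda>(p, x). p(Suc n := x)) (p, q (Suc n))" unfolding p_def by simp
  show "q \<in> (\<lambda>(p, x). p(Suc n := x)) ` (PF n \<times> {0..n})"
    by (rule image_eqI[where f="\<lambda>(p, x). p(Suc n := x)" and x="(p, q (Suc n))", OF qeq mem])
next
  fix q assume "q \<in> (\<lambda>(p, x). p(Suc n := x)) ` (PF n \<times> {0..n})"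
  then obtain p x where p: "p \<in> PF n" and x: "x \<le> n" and q: "q = p(Suc n := x)" by auto
  show "q \<in> PF (Suc n)" unfolding PF_def
  proof (intro CollectI allI conjI impI)
    fix j assume j: "j \<in> {1..Suc n}"
    show "q j < j"
    proof (cases "j = Suc n")
      case True then show ?thesis using q x by simp
    next
      case False then show ?thesis using q j PF_D1[OF p, of j] by auto
    qed
  next
    fix j assume j: "j \<notin> {1..Suc n}"
    then have "j \<notin> {1..n}" "j \<noteq> Suc n" by auto
    then show "q j = 0" using p q unfolding PF_def by auto
  qed
qed

lemma PF_Suc_inj: "inj_on (\<lambda>(p, x). p(Suc n := x)) (PF n \<times> {0..n})"
proof (rule inj_onI)
  fix a b assume a: "a \<in> PF n \<times> {0..n}" and b: "b \<in> PF n \<times> {0..n}"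
    and eq: "(\<lambda>(p, x). p(Suc n := x)) a = (\<lambda>(p, x). p(Suc n := x)) b"
  obtain p x where ax: "a = (p, x)" by (cases a)
  obtain q y where by': "b = (q, y)" by (cases b)
  have p: "p \<in> PF n" and q: "q \<in> PF n" using a b ax by' by auto
  have e: "p(Suc n := x) = q(Suc n := y)" using eq ax by' by simp
  have "x = y" using fun_cong[OF e, of "Suc n"] by simp
  moreover have "p = q"
  proof
    fix j show "p j = q j"
    proof (cases "j = Suc n")
      case True
      then have "j \<notin> {1..n}" by simp
      then show ?thesis using p q unfolding PF_def by auto
    next
      case False then show ?thesis using fun_cong[OF e, of j] by simp
    qed
  qed
  ultimately show "a = b" using ax by' by simp
qed

lemma finite_PF: "finite (PF n)"
proof (induction n)
  case 0 then show ?case by (simp add: PF_0)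
next
  case (Suc n) then show ?case unfolding PF_Suc by simp
qed

lemma ch_upd:
  assumes p: "p \<in> PF n" and m: "1 \<le> m"
  shows "ch (p(Suc n := x)) m = (if m = x then insert (Suc n) (ch p m) else ch p m)"
proof -
  have "p (Suc n) = 0" using p unfolding PF_def by auto
  then show ?thesis unfolding ch_def using m by auto
qed

lemma W_upd:
  assumes p: "p \<in> PF n" and x: "x \<le> n"
  shows "W (Suc n) (p(Suc n := x)) = W n p * (if x = 0 then 1 else Suc (card (ch p x)))"
proof -
  let ?q = "p(Suc n := x)"
  have last: "ch ?q (Suc n) = {}"
  proof -
    have "?q j \<noteq> Suc n" for j
    proof (cases "j = Suc n")
      case True then show ?thesis using x by simp
    next
      case False
      show ?thesis
      proof (cases "j \<in> {1..n}")
        case True then show ?thesis using PF_D1[OF p, of j] False by auto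
      next
        case False then show ?thesis using p \<open>j \<noteq> Suc n\<close> unfolding PF_def by auto
      qed
    qed
    then show ?thesis unfolding ch_def by auto
  qed
  have fm: "fact (card (ch ?q m)) = fact (card (ch p m)) * (if m = x then Suc (card (ch p m)) else 1)"
    if m: "m \<in> {1..n}" for m
  proof -
    have m1: "1 \<le> m" using m by simp
    have "Suc n \<notin> ch p m" using ch_sub[OF p m1] by auto
    show ?thesis
    proof (cases "m = x")
      case True
      then have "card (ch ?q m) = Suc (card (ch p m))"
        using ch_upd[OF p m1, of x] ch_finite[OF p m1] \<open>Suc n \<notin> ch p m\<close> by simp
      moreover have "fact (Suc c) = fact c * Suc (c::nat)" for c by (simp add: mult.commute)
      ultimately show ?thesis using True by simp
    next
      case False
      then show ?thesis using ch_upd[OF p m1, of x] by simp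
    qed
  qed
  have "W (Suc n) ?q = (\<Prod>m\<in>{1..n}. fact (card (ch ?q m))) * fact (card (ch ?q (Suc n)))"
    unfolding W_def by (simp add: prod.cl_ivl_Suc)
  also have "\<dots> = (\<Prod>m\<in>{1..n}. fact (card (ch p m)) * (if m = x then Suc (card (ch p m)) else 1))"
    using last fm by simp
  also have "\<dots> = W n p * (\<Prod>m\<in>{1..n}. (if m = x then Suc (card (ch p m)) else 1))"
    unfolding W_def by (simp add: prod.distrib)
  also have "(\<Prod>m\<in>{1..n}. (if m = x then Suc (card (ch p m)) else 1)) = (if x = 0 then 1 else Suc (card (ch p x)))"
    using x by (simp add: prod.delta')
  finally show ?thesis .
qed

lemma edges_upd:
  assumes p: "p \<in> PF n"
  shows "edges (p(Suc n := x)) = edges p + (if x = 0 then 0 else 1)"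
proof -
  have ps: "p (Suc n) = 0" using p unfolding PF_def by auto
  have fin: "finite {j. p j \<noteq> 0}" using finite_subset[OF nz_sub[OF p]] by simp
  show ?thesis
  proof (cases "x = 0")
    case True
    then have "{j. (p(Suc n := x)) j \<noteq> 0} = {j. p j \<noteq> 0}" using ps by auto
    then show ?thesis unfolding edges_def using True by simp
  next
    case False
    then have "{j. (p(Suc n := x)) j \<noteq> 0} = insert (Suc n) {j. p j \<noteq> 0}" using ps by auto
    moreover have "Suc n \<notin> {j. p j \<noteq> 0}" using ps by simp
    ultimately show ?thesis unfolding edges_def using False fin by simp
  qed
qed

lemma sum_ch:
  assumes p: "p \<in> PF n"
  shows "(\<Sum>x\<in>{1..n}. card (ch p x)) = edges p"
proof -
  have "(\<Union>x\<in>{1..n}. ch p x) = {j. p j \<noteq> 0}"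
  proof (intro equalityI subsetI)
    fix j assume "j \<in> (\<Union>x\<in>{1..n}. ch p x)"
    then show "j \<in> {j. p j \<noteq> 0}" unfolding ch_def by auto
  next
    fix j assume j: "j \<in> {j. p j \<noteq> 0}"
    then have "1 \<le> j \<and> j \<le> n" using PF_D2[OF p] by simp
    then have "p j < j" using PF_D1[OF p] by simp
    then have "p j \<in> {1..n}" using j \<open>1 \<le> j \<and> j \<le> n\<close> by simp
    then show "j \<in> (\<Union>x\<in>{1..n}. ch p x)" unfolding ch_def by blast
  qed
  moreover have "card (\<Union>x\<in>{1..n}. ch p x) = (\<Sum>x\<in>{1..n}. card (ch p x))"
  proof (rule card_UN_disjoint)
    show "\<forall>i\<in>{1..n}. finite (ch p i)" using ch_finite[OF p] by simp
  qed (auto simp: ch_def)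
  ultimately show ?thesis unfolding edges_def by simp
qed

lemma Ecomb_Suc:
  "Ecomb (Suc n) e = (\<Sum>p\<in>PF n. (if edges p = e then W n p else 0)
      + (if Suc (edges p) = e then W n p * (n + edges p) else 0))"
proof -
  let ?f = "\<lambda>q. if edges q = e then W (Suc n) q else 0"
  have "Ecomb (Suc n) e = sum ?f ((\<lambda>(p, x). p(Suc n := x)) ` (PF n \<times> {0..n}))"
    unfolding Ecomb_def PF_Suc ..
  also have "\<dots> = (\<Sum>(p, x)\<in>PF n \<times> {0..n}. ?f (p(Suc n := x)))"
    unfolding sum.reindex[OF PF_Suc_inj] comp_def by (rule sum.cong[OF refl]) (auto split: prod.splits)
  also have "\<dots> = (\<Sum>p\<in>PF n. \<Sum>x\<in>{0..n}. ?f (p(Suc n := x)))"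
    by (rule sum.cartesian_product[symmetric])
  also have "\<dots> = (\<Sum>p\<in>PF n. (if edges p = e then W n p else 0)
      + (if Suc (edges p) = e then W n p * (n + edges p) else 0))"
  proof (rule sum.cong[OF refl])
    fix p assume p: "p \<in> PF n"
    have g: "?f (p(Suc n := x)) = (if x = 0 then (if edges p = e then W n p else 0)
        else (if Suc (edges p) = e then W n p * Suc (card (ch p x)) else 0))" if "x \<le> n" for x
      using W_upd[OF p that] edges_upd[OF p, of x] by auto
    have "(\<Sum>x\<in>{0..n}. ?f (p(Suc n := x))) = ?f (p(Suc n := 0)) + (\<Sum>x\<in>{1..n}. ?f (p(Suc n := x)))"
      by (simp add: sum.atLeast_Suc_atMost)
    also have "(\<Sum>x\<in>{1..n}. ?f (p(Suc n := x))) = (\<Sum>x\<in>{1..n}. if Suc (edges p) = e then W n p * Suc (card (ch p x)) else 0)"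
      by (rule sum.cong[OF refl]) (simp add: g)
    also have "\<dots> = (if Suc (edges p) = e then W n p * (n + edges p) else 0)"
    proof (cases "Suc (edges p) = e")
      case True
      have "(\<Sum>x\<in>{1..n}. W n p * Suc (card (ch p x))) = W n p * (\<Sum>x\<in>{1..n}. Suc (card (ch p x)))"
        by (simp add: sum_distrib_left)
      also have "(\<Sum>x\<in>{1..n}. Suc (card (ch p x))) = (\<Sum>x\<in>{1..n}. 1 + card (ch p x))"
        by simp
      also have "\<dots> = card {1..n} + (\<Sum>x\<in>{1..n}. card (ch p x))"
        by (simp only: sum.distrib card_eq_sum)
      also have "\<dots> = n + edges p" using sum_ch[OF p] by simp
      finally show ?thesis using True by simp
    qed simp
    also have "?f (p(Suc n := 0)) = (if edges p = e then W n p else 0)" using g[of 0] by simp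
    finally show "(\<Sum>x\<in>{0..n}. ?f (p(Suc n := x))) = (if edges p = e then W n p else 0)
      + (if Suc (edges p) = e then W n p * (n + edges p) else 0)" .
  qed
  finally show ?thesis .
qed

lemma Ecomb_Ef: "Ecomb n e = Ef n e"
proof (induction n arbitrary: e)
  case 0
  have "W 0 (\<lambda>_. 0) = 1" unfolding W_def by simp
  moreover have "edges (\<lambda>_. 0::nat) = 0" unfolding edges_def by simp
  ultimately show ?case unfolding Ecomb_def PF_0 by (cases e) auto
next
  case (Suc n)
  show ?case
  proof (cases e)
    case 0
    then have "Ecomb (Suc n) e = Ecomb n 0" unfolding Ecomb_Suc unfolding Ecomb_def by simp
    then show ?thesis using Suc.IH 0 by simp
  next
    case (Suc e')
    have "Ecomb (Suc n) e = Ecomb n (Suc e') + (\<Sum>p\<in>PF n. if edges p = e' then W n p * (n + e') else 0)"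
      unfolding Ecomb_Suc Suc unfolding Ecomb_def sum.distrib by (simp add: sum.cong[OF refl] if_distrib cong: if_cong)
    also have "(\<Sum>p\<in>PF n. if edges p = e' then W n p * (n + e') else 0) = (n + e') * Ecomb n e'"
      unfolding Ecomb_def sum_distrib_left by (rule sum.cong[OF refl]) simp
    finally show ?thesis using Suc.IH Suc by simp
  qed
qed

lemma sum_W: "(\<Sum>p\<in>PF n. W n p) = lcs n"
proof -
  have "lcs n = (\<Sum>e\<le>n. Ecomb n e)" unfolding lcs_def Ecomb_Ef ..
  also have "\<dots> = (\<Sum>p\<in>PF n. \<Sum>e\<le>n. if edges p = e then W n p else 0)"
    unfolding Ecomb_def by (rule sum.swap)
  also have "\<dots> = (\<Sum>p\<in>PF n. W n p)"
    by (rule sum.cong[OF refl]) (simp add: sum.delta edges_le)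
  finally show ?thesis by simp
qed


theorem theorem4p7:
  shows "lc 1 = 1 \<and> lc 2 = 2 \<and>
         (\<forall>n::nat. n \<ge> 3 \<longrightarrow> lc n = (2 * n - 3) * lc (n - 1) + lc (n - 2))"
proof -
  have lcl: "lc n = lcs n" for n using lc_sum LP_sum_PF sum_W by simp
  have a: "lc 1 = 1" unfolding lcl by (simp add: lcs_def)
  have b: "lc 2 = 2" unfolding lcl by (simp add: lcs_def numeral_2_eq_2)
  have c: "lc n = (2 * n - 3) * lc (n - 1) + lc (n - 2)" if n: "n \<ge> 3" for n
  proof -
    define m where "m = n - 2"
    have m: "n = m + 2" using n unfolding m_def by simp
    have "lc n = (2*m+1) * lc (m+1) + lc m" unfolding lcl m by (rule lcs_rec)
    moreover have "2 * n - 3 = 2*m+1" "n - 1 = m + 1" "n - 2 = m" using m n by auto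
    ultimately show ?thesis by simp
  qed
  show ?thesis using a b c by blast
qed

end
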